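(* Let $\varphi$ be a skew-morphism of a finite group $A$ and let $\Pi$ be a set of primes. Then $\mathrm{Orbit}^\Pi\varphi=\{x\in A : |O_x| \text{ is a } \Pi\text{-number}\}$ is a $\varphi$-invariant subgroup of $A$ containing $\mathrm{Fix}\,\varphi$.
   Context: A skew-morphism of a finite group $A$ is a permutation $\varphi$ of the set $A$ with $\varphi(1)=1$ for which there exists a function $\pi:A\to\mathbb{Z}_n$, where $n$ is the order of $\varphi$ as a permutation, such that $\varphi(xy)=\varphi(x)\varphi^{\pi(x)}(y)$ for all $x,y\in A$. A subset $N\subseteq A$ is $\varphi$-invariant if $\varphi(N)=N$. $O_x$ denotes the orbit of $\varphi$ containing $x$, and $\mathrm{Fix}\,\varphi=\{x\in A:\varphi(x)=x\}$. For a set $\Pi$ of primes, a positive integer is a $\Pi$-number if all its prime divisors lie in $\Pi$; by convention $1$ is a $\Pi$-number. *)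

theory Defs
  imports "HOL-Algebra.Group" "HOL-Computational_Algebra.Primes"
begin

definition perm_order :: "('a, 'b) monoid_scheme \<Rightarrow> ('a \<Rightarrow> 'a) \<Rightarrow> nat" where
  "perm_order G phi = (LEAST k. 0 < k \<and> (\<forall>x\<in>carrier G. (phi ^^ k) x = x))"

text \<open>Skew-morphism: permutation of the carrier fixing 1, with a power function
  pi : carrier G -> Z_n (represented by residues 0..n-1), n the order of phi.\<close>
definition skew_morphism :: "('a, 'b) monoid_scheme \<Rightarrow> ('a \<Rightarrow> 'a) \<Rightarrow> bool" where
  "skew_morphism G phi \<longleftrightarrow>
     bij_betw phi (carrier G) (carrier G) \<and> phi \<one>\<^bsub>G\<^esub> = \<one>\<^bsub>G\<^esub> \<and>
     (\<exists>pi :: 'a \<Rightarrow> nat. (\<forall>x\<in>carrier G. pi x < perm_order G phi) \<and>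
        (\<forall>x\<in>carrier G. \<forall>y\<in>carrier G.
           phi (x \<otimes>\<^bsub>G\<^esub> y) = phi x \<otimes>\<^bsub>G\<^esub> (phi ^^ pi x) y))"

definition orbit_of :: "('a \<Rightarrow> 'a) \<Rightarrow> 'a \<Rightarrow> 'a set" where
  "orbit_of phi x = {(phi ^^ k) x | k. True}"

definition fix_set :: "('a, 'b) monoid_scheme \<Rightarrow> ('a \<Rightarrow> 'a) \<Rightarrow> 'a set" where
  "fix_set G phi = {x \<in> carrier G. phi x = x}"

definition is_Pi_number :: "nat set \<Rightarrow> nat \<Rightarrow> bool" where
  "is_Pi_number P m \<longleftrightarrow> (\<forall>p. prime p \<and> p dvd m \<longrightarrow> p \<in> P)"

definition orbit_Pi :: "('a, 'b) monoid_scheme \<Rightarrow> ('a \<Rightarrow> 'a) \<Rightarrow> nat set \<Rightarrow> 'a set" where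
  "orbit_Pi G phi P = {x \<in> carrier G. is_Pi_number P (card (orbit_of phi x))}"

end

theory Submission
  imports Defs "HOL-Algebra.Multiplicative_Group"
begin

lemma funpow_in_set:
  assumes "\<forall>y\<in>S. f y \<in> S" "z \<in> S" shows "(f ^^ k) z \<in> S"
  using assms by (induction k) auto

lemma funpow_cancel:
  assumes inj: "inj_on f S" and cl: "\<forall>y\<in>S. f y \<in> S"
  shows "\<forall>a b. a \<in> S \<longrightarrow> b \<in> S \<longrightarrow> (f ^^ i) a = (f ^^ i) b \<longrightarrow> a = b"
proof (induction i)
  case 0 then show ?case by simp
next
  case (Suc i)
  show ?case
  proof (intro allI impI)
    fix a b assume a: "a \<in> S" and b: "b \<in> S" and e: "(f ^^ Suc i) a = (f ^^ Suc i) b"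
    have "(f ^^ i) a = (f ^^ i) b"
      using e inj funpow_in_set[OF cl a] funpow_in_set[OF cl b]
      by (auto simp: inj_on_def)
    then show "a = b" using Suc a b by blast
  qed
qed

lemma funpow_fix_mult:
  assumes "(f ^^ m) y = y" shows "(f ^^ (m * q)) y = y"
proof -
  have "((f ^^ m) ^^ q) y = y" by (induction q) (auto simp: assms)
  then show ?thesis by (simp add: funpow_mult)
qed

lemma period:
  assumes inj: "inj_on f S" and cl: "\<forall>y\<in>S. f y \<in> S" and fin: "finite S" and z: "z \<in> S"
  shows "0 < card (orbit_of f z) \<and> (f ^^ card (orbit_of f z)) z = z
         \<and> (\<forall>N. (f ^^ N) z = z \<longrightarrow> card (orbit_of f z) dvd N)"
proof -
  define g where "g = (\<lambda>k. (f ^^ k) z)"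
  have gS: "g ` {..card S} \<subseteq> S" using funpow_in_set[OF cl z] by (auto simp: g_def)
  have "card (g ` {..card S}) \<le> card S" using card_mono[OF fin gS] .
  then have "\<not> inj_on g {..card S}" by (intro pigeonhole) simp
  then obtain i j where ij: "i < j" "g i = g j"
    by (auto simp: inj_on_def) (metis linorder_neqE_nat)
  have "(f ^^ i) z = (f ^^ i) ((f ^^ (j - i)) z)"
  proof -
    have "(f ^^ (i + (j - i))) z = (f ^^ i) ((f ^^ (j - i)) z)" by (simp only: funpow_add comp_apply)
    moreover have "i + (j - i) = j" using ij by simp
    ultimately show ?thesis using ij by (simp add: g_def)
  qed
  then have ex: "(f ^^ (j - i)) z = z"
    using funpow_cancel[OF inj cl] z funpow_in_set[OF cl z] by metis
  define p where "p = (LEAST p. 0 < p \<and> (f ^^ p) z = z)"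
  have pP: "0 < p \<and> (f ^^ p) z = z"
    unfolding p_def by (rule LeastI[of _ "j - i"]) (use ij ex in auto)
  have pmin: "\<And>q. 0 < q \<Longrightarrow> q < p \<Longrightarrow> (f ^^ q) z \<noteq> z"
    unfolding p_def using not_less_Least by blast
  have red: "(f ^^ N) z = (f ^^ (N mod p)) z" for N
  proof -
    have h: "N mod p + p * (N div p) = N" by simp
    have "(f ^^ (N mod p + p * (N div p))) z = (f ^^ (N mod p)) ((f ^^ (p * (N div p))) z)"
      by (simp only: funpow_add comp_apply)
    then have "(f ^^ N) z = (f ^^ (N mod p)) ((f ^^ (p * (N div p))) z)"
      by (simp only: h)
    also have "(f ^^ (p * (N div p))) z = z" using funpow_fix_mult[where f=f and m=p and y=z and q="N div p"] pP by simp
    finally show ?thesis .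
  qed
  have orb: "orbit_of f z = g ` {..<p}"
  proof
    show "orbit_of f z \<subseteq> g ` {..<p}"
    proof
      fix w assume "w \<in> orbit_of f z"
      then obtain k where k: "w = (f ^^ k) z" unfolding orbit_of_def by blast
      then have "w = g (k mod p)" using red by (simp add: g_def)
      moreover have "k mod p < p" using pP by simp
      ultimately show "w \<in> g ` {..<p}" by blast
    qed
    show "g ` {..<p} \<subseteq> orbit_of f z" unfolding orbit_of_def g_def by auto
  qed
  have injg: "inj_on g {..<p}"
  proof (rule inj_onI)
    fix a b assume a: "a \<in> {..<p}" and b: "b \<in> {..<p}" and e: "g a = g b"
    show "a = b"
    proof (rule ccontr)
      assume "a \<noteq> b"
      then consider "a < b" | "b < a" by linarith
      then show False
      proof cases
        case 1
        have "(f ^^ a) z = (f ^^ a) ((f ^^ (b - a)) z)"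
          proof -
          have "(f ^^ (a + (b - a))) z = (f ^^ a) ((f ^^ (b - a)) z)" by (simp only: funpow_add comp_apply)
          moreover have "a + (b - a) = b" using 1 by simp
          ultimately show ?thesis using e by (simp add: g_def)
        qed
        then have "(f ^^ (b - a)) z = z"
          using funpow_cancel[OF inj cl] z funpow_in_set[OF cl z] by metis
        then show False using pmin[of "b - a"] 1 b by (simp add: less_imp_diff_less)
      next
        case 2
        have "(f ^^ b) z = (f ^^ b) ((f ^^ (a - b)) z)"
          proof -
          have "(f ^^ (b + (a - b))) z = (f ^^ b) ((f ^^ (a - b)) z)" by (simp only: funpow_add comp_apply)
          moreover have "b + (a - b) = a" using 2 by simp
          ultimately show ?thesis using e by (simp add: g_def)
        qed
        then have "(f ^^ (a - b)) z = z"
          using funpow_cancel[OF inj cl] z funpow_in_set[OF cl z] by metis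
        then show False using pmin[of "a - b"] 2 a by (simp add: less_imp_diff_less)
      qed
    qed
  qed
  have cardp: "card (orbit_of f z) = p" using orb card_image[OF injg] by simp
  have dv: "\<forall>N. (f ^^ N) z = z \<longrightarrow> p dvd N"
  proof (intro allI impI)
    fix N assume "(f ^^ N) z = z"
    then have "(f ^^ (N mod p)) z = z" using red by simp
    then have "N mod p = 0" using pmin[of "N mod p"] pP by (metis mod_less_divisor neq0_conv)
    then show "p dvd N" by auto
  qed
  show ?thesis using cardp pP dv by simp
qed

lemma skew_pow:
  fixes G (structure)
  assumes x: "x \<in> carrier G" and cl: "\<forall>y\<in>carrier G. phi y \<in> carrier G"
    and sk: "\<forall>x\<in>carrier G. \<forall>y\<in>carrier G. phi (x \<otimes> y) = phi x \<otimes> (phi ^^ pw x) y"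
  shows "\<exists>s. \<forall>y\<in>carrier G. (phi ^^ k) (x \<otimes> y) = (phi ^^ k) x \<otimes> (phi ^^ s) y"
proof (induction k)
  case 0 show ?case by (rule exI[of _ 0]) simp
next
  case (Suc k)
  then obtain s where s: "\<forall>y\<in>carrier G. (phi ^^ k) (x \<otimes> y) = (phi ^^ k) x \<otimes> (phi ^^ s) y" by blast
  show ?case
  proof (intro exI ballI)
    fix y assume y: "y \<in> carrier G"
    have a: "(phi ^^ k) x \<in> carrier G" using funpow_in_set[OF cl x] .
    have b: "(phi ^^ s) y \<in> carrier G" using funpow_in_set[OF cl y] .
    have "(phi ^^ Suc k) (x \<otimes> y) = phi ((phi ^^ k) x \<otimes> (phi ^^ s) y)" using s y by simp
    also have "\<dots> = phi ((phi ^^ k) x) \<otimes> (phi ^^ pw ((phi ^^ k) x)) ((phi ^^ s) y)"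
      using sk a b by blast
    also have "\<dots> = (phi ^^ Suc k) x \<otimes> (phi ^^ (pw ((phi ^^ k) x) + s)) y"
      by (simp add: funpow_add)
    finally show "(phi ^^ Suc k) (x \<otimes> y) = (phi ^^ Suc k) x \<otimes> (phi ^^ (pw ((phi ^^ k) x) + s)) y" .
  qed
qed

lemma orbit_step_card:
  assumes inj: "inj_on f S" and cl: "\<forall>y\<in>S. f y \<in> S" and x: "x \<in> S"
  shows "card (orbit_of f (f x)) = card (orbit_of f x)"
proof -
  have e: "orbit_of f (f x) = f ` orbit_of f x"
  proof -
    have "{(f ^^ k) (f x) | k. True} = {f ((f ^^ k) x) | k. True}" by (simp add: funpow_swap1)
    also have "\<dots> = f ` {(f ^^ k) x | k. True}" by blast
    finally show ?thesis unfolding orbit_of_def .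
  qed
  have sub: "orbit_of f x \<subseteq> S" unfolding orbit_of_def using funpow_in_set[OF cl x] by auto
  have "inj_on f (orbit_of f x)" using inj_on_subset[OF inj sub] .
  then show ?thesis using e card_image by metis
qed

theorem mainTheorem2:
  fixes G (structure) and phi :: "'a \<Rightarrow> 'a" and P :: "nat set"
  assumes "group G" and "finite (carrier G)"
    and "skew_morphism G phi"
    and "\<forall>p\<in>P. prime p"
  shows "subgroup (orbit_Pi G phi P) G \<and> phi ` (orbit_Pi G phi P) = orbit_Pi G phi P
         \<and> fix_set G phi \<subseteq> orbit_Pi G phi P"
proof -
  interpret group G by fact
  note fin = assms(2)
  have bij: "bij_betw phi (carrier G) (carrier G)" and one: "phi \<one> = \<one>"
    using assms(3) unfolding skew_morphism_def by auto
  obtain pw :: "'a \<Rightarrow> nat" where sk: "\<forall>x\<in>carrier G. \<forall>y\<in>carrier G. phi (x \<otimes> y) = phi x \<otimes> (phi ^^ pw x) y"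
    using assms(3) unfolding skew_morphism_def by blast
  have inj: "inj_on phi (carrier G)" by (simp add: bij_betw_imp_inj_on[OF bij] bij_betw_imp_surj_on[OF bij])
  have surj: "phi ` carrier G = carrier G" by (simp add: bij_betw_imp_inj_on[OF bij] bij_betw_imp_surj_on[OF bij])
  have cl: "\<forall>y\<in>carrier G. phi y \<in> carrier G" using surj by blast
  note per = period[OF inj cl fin]
  let ?O = "orbit_Pi G phi P"
  have fixin: "fix_set G phi \<subseteq> ?O"
  proof
    fix x assume "x \<in> fix_set G phi"
    then have x: "x \<in> carrier G" "phi x = x" unfolding fix_set_def by auto
    have "(phi ^^ k) x = x" for k by (induction k) (auto simp: x(2))
    then have "orbit_of phi x = {x}" unfolding orbit_of_def by auto
    then show "x \<in> ?O" using x unfolding orbit_Pi_def is_Pi_number_def by auto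
  qed
  have oneO: "\<one> \<in> ?O" using fixin one unfolding fix_set_def by auto
  have mult: "x \<otimes> y \<in> ?O" if x: "x \<in> ?O" and y: "y \<in> ?O" for x y
  proof -
    have xc: "x \<in> carrier G" and yc: "y \<in> carrier G" using x y unfolding orbit_Pi_def by auto
    define c where "c = card (orbit_of phi x)"
    define d where "d = card (orbit_of phi y)"
    obtain s where s: "\<forall>y\<in>carrier G. (phi ^^ c) (x \<otimes> y) = (phi ^^ c) x \<otimes> (phi ^^ s) y"
      using skew_pow[OF xc cl sk] by blast
    have cx: "(phi ^^ c) x = x" using per[OF xc] c_def by simp
    have dy: "(phi ^^ d) y = y" using per[OF yc] d_def by simp
    have it: "(phi ^^ (c * q)) (x \<otimes> z) = x \<otimes> (phi ^^ (s * q)) z" if z: "z \<in> carrier G" for q z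
    proof (induction q)
      case 0 show ?case by simp
    next
      case (Suc q)
      have zz: "(phi ^^ (s * q)) z \<in> carrier G" using funpow_in_set[OF cl z] .
      have "(phi ^^ (c * Suc q)) (x \<otimes> z) = (phi ^^ c) ((phi ^^ (c * q)) (x \<otimes> z))"
        by (simp add: funpow_add)
      also have "\<dots> = (phi ^^ c) (x \<otimes> (phi ^^ (s * q)) z)" using Suc by simp
      also have "\<dots> = x \<otimes> (phi ^^ s) ((phi ^^ (s * q)) z)" using s zz cx by simp
      also have "\<dots> = x \<otimes> (phi ^^ (s * Suc q)) z" by (simp add: funpow_add)
      finally show ?case .
    qed
    have "(phi ^^ (s * d)) y = y"
      using funpow_fix_mult[where f=phi and m=d and y=y and q=s] dy by (simp add: mult.commute)
    then have "(phi ^^ (c * d)) (x \<otimes> y) = x \<otimes> y" using it[OF yc, of d] by simp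
    then have dv: "card (orbit_of phi (x \<otimes> y)) dvd c * d" using per[OF m_closed[OF xc yc]] by blast
    have "is_Pi_number P (card (orbit_of phi (x \<otimes> y)))"
      unfolding is_Pi_number_def
    proof (intro allI impI)
      fix p assume p: "prime p \<and> p dvd card (orbit_of phi (x \<otimes> y))"
      then have "p dvd c * d" using dv dvd_trans by blast
      then have "p dvd c \<or> p dvd d" using p prime_dvd_mult_iff by blast
      then show "p \<in> P" using x y p unfolding orbit_Pi_def is_Pi_number_def c_def d_def by auto
    qed
    then show ?thesis unfolding orbit_Pi_def using xc yc by auto
  qed
  have pows: "x [^] (k::nat) \<in> ?O" if x: "x \<in> ?O" for x k
    using x proof (induction k)
    case 0 then show ?case using oneO by simp
  next
    case (Suc k) then show ?case using mult by simp
  qed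
  have invO: "inv x \<in> ?O" if x: "x \<in> ?O" for x
  proof -
    have xc: "x \<in> carrier G" using x unfolding orbit_Pi_def by auto
    have o: "order G \<noteq> 0" using fin unfolding order_def
      by (metis card_0_eq empty_iff one_closed)
    have "x [^] (order G - 1) \<otimes> x = \<one>"
      using pow_order_eq_1[OF xc] o by (metis One_nat_def Suc_diff_1 neq0_conv nat_pow_Suc)
    then have "inv x = x [^] (order G - 1)"
      using xc by (metis inv_char nat_pow_closed inv_equality)
    then show ?thesis using pows[OF x] by simp
  qed
  have sub: "subgroup ?O G"
    by (rule subgroupI) (use oneO mult invO in \<open>auto simp: orbit_Pi_def\<close>)
  have img: "phi ` ?O = ?O"
  proof
    show "phi ` ?O \<subseteq> ?O"
      using orbit_step_card[OF inj cl] cl unfolding orbit_Pi_def by auto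
    show "?O \<subseteq> phi ` ?O"
    proof
      fix x assume x: "x \<in> ?O"
      then have xc: "x \<in> carrier G" unfolding orbit_Pi_def by auto
      then obtain y where y: "y \<in> carrier G" "x = phi y" using surj by blast
      then have "y \<in> ?O" using x orbit_step_card[OF inj cl y(1)] unfolding orbit_Pi_def by auto
      then show "x \<in> phi ` ?O" using y by blast
    qed
  qed
  show ?thesis using sub img fixin by blast
qed

end
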